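(* Let $\mathcal{A}$ be a deterministic generalised Büchi automaton with $n$ states and $k$ output colours. Then there is a deterministic generalised Büchi automaton recognising $\mathcal{L}(\mathcal{A})$ which has the minimal number of states among all deterministic generalised Büchi automata recognising $\mathcal{L}(\mathcal{A})$ and which uses $O(n^2k)$ output colours.
   Context: An automaton is a tuple $(Q,\Sigma,q_{\mathrm{init}},\Delta,\Gamma,\mathrm{col},W)$ with finite state set, finite input alphabet, initial state, transitions $\Delta\subseteq Q\times\Sigma\times Q$, output alphabet $\Gamma$, labelling $\mathrm{col}:\Delta\to\Gamma$, acceptance condition $W\subseteq\Gamma^\omega$. A run on $w=a_1a_2\cdots$ is a sequence $(q_0,a_1,q_1)(q_1,a_2,q_2)\cdots$ of transitions with $q_0=q_{\mathrm{init}}$, accepting if its label sequence is in $W$; $\mathcal{L}(\mathcal{A})$ is the set of words with an accepting run. A generalised Büchi automaton with finite output colour set $C$ has $\Gamma=2^C$ and $W=\{x : \text{every } c\in C \text{ occurs in infinitely many letters of } x\}$; its number of output colours is $|C|$. Deterministic: for each $(p,a)$ at most one $q$ with $(p,a,q)\in\Delta$. *)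

theory Defs
  imports Main
begin

text \<open>An automaton (Q, Sigma, q_init, Delta, Gamma = 2^C, col, W) with generalised Buechi
  acceptance over the finite output colour set C.\<close>
record ('q, 'a, 'c) gba =
  states  :: "'q set"
  alph    :: "'a set"
  init    :: 'q
  trans   :: "('q \<times> 'a \<times> 'q) set"
  col     :: "'q \<times> 'a \<times> 'q \<Rightarrow> 'c set"
  colours :: "'c set"

definition wf_gba :: "('q, 'a, 'c) gba \<Rightarrow> bool" where
  "wf_gba A \<longleftrightarrow> finite (states A) \<and> finite (alph A) \<and> finite (colours A)
     \<and> init A \<in> states A
     \<and> trans A \<subseteq> states A \<times> alph A \<times> states A
     \<and> (\<forall>t \<in> trans A. col A t \<subseteq> colours A)"

definition deterministic :: "('q, 'a, 'c) gba \<Rightarrow> bool" where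
  "deterministic A \<longleftrightarrow>
     (\<forall>p a q q'. (p, a, q) \<in> trans A \<and> (p, a, q') \<in> trans A \<longrightarrow> q = q')"

definition dgba :: "('q, 'a, 'c) gba \<Rightarrow> bool" where
  "dgba A \<longleftrightarrow> wf_gba A \<and> deterministic A"

definition is_run :: "('q, 'a, 'c) gba \<Rightarrow> (nat \<Rightarrow> 'a) \<Rightarrow> (nat \<Rightarrow> 'q) \<Rightarrow> bool" where
  "is_run A w r \<longleftrightarrow> r 0 = init A \<and> (\<forall>i. (r i, w i, r (Suc i)) \<in> trans A)"

definition accepting_run :: "('q, 'a, 'c) gba \<Rightarrow> (nat \<Rightarrow> 'a) \<Rightarrow> (nat \<Rightarrow> 'q) \<Rightarrow> bool" where
  "accepting_run A w r \<longleftrightarrow>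
     (\<forall>c \<in> colours A. \<exists>\<^sub>\<infinity>i. c \<in> col A (r i, w i, r (Suc i)))"

definition lang :: "('q, 'a, 'c) gba \<Rightarrow> (nat \<Rightarrow> 'a) set" where
  "lang A = {w. (\<forall>i. w i \<in> alph A) \<and> (\<exists>r. is_run A w r \<and> accepting_run A w r)}"

end

theory Submission
  imports Defs "HOL-Library.Infinite_Set" "HOL-Library.Nat_Bijection"
begin

definition fpath :: "('s \<times> 'a \<times> 's) set \<Rightarrow> (nat \<Rightarrow> 's) \<Rightarrow> (nat \<Rightarrow> 'a) \<Rightarrow> nat \<Rightarrow> bool" where
  "fpath Tr p w n \<longleftrightarrow> (\<forall>i<n. (p i, w i, p (Suc i)) \<in> Tr)"

lemma fpath_concat:
  assumes "fpath Tr p w n" "fpath Tr p' w' n'" "p n = p' 0"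
  shows "fpath Tr (\<lambda>i. if i \<le> n then p i else p' (i - n)) (\<lambda>i. if i < n then w i else w' (i - n)) (n + n')"
  unfolding fpath_def
proof (intro allI impI)
  fix i assume i: "i < n + n'"
  show "((if i \<le> n then p i else p' (i - n)), (if i < n then w i else w' (i - n)),
          (if Suc i \<le> n then p (Suc i) else p' (Suc i - n))) \<in> Tr"
  proof (cases "i < n")
    case True then show ?thesis using assms(1) unfolding fpath_def by auto
  next
    case False
    then have "i - n < n'" "Suc i - n = Suc (i - n)" using i by auto
    moreover have "(if i \<le> n then p i else p' (i - n)) = p' (i - n)"
      using False assms(3) by auto
    ultimately show ?thesis using assms(2) False unfolding fpath_def by auto
  qed
qed

definition covers :: "(('p \<times> 'q) \<times> 'a \<times> ('p \<times> 'q)) set \<Rightarrow> 'p \<times> 'q \<Rightarrow> (nat \<Rightarrow> 'p \<times> 'q) \<Rightarrow> (nat \<Rightarrow> 'a) \<Rightarrow> nat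
   \<Rightarrow> ('p \<times> 'a \<times> 'p) set \<Rightarrow> bool" where
  "covers Tr x P W L T \<longleftrightarrow> fpath Tr P W L \<and> P 0 = x \<and> P L = x \<and>
     (\<forall>t\<in>T. \<exists>i<L. t = (fst (P i), W i, fst (P (Suc i))))"

lemma covers_union:
  assumes "covers Tr x P W L T" "covers Tr x P' W' L' T'"
  shows "covers Tr x (\<lambda>i. if i \<le> L then P i else P' (i - L)) (\<lambda>i. if i < L then W i else W' (i - L)) (L + L') (T \<union> T')"
proof -
  have fp: "fpath Tr (\<lambda>i. if i \<le> L then P i else P' (i - L)) (\<lambda>i. if i < L then W i else W' (i - L)) (L + L')"
    using assms unfolding covers_def by (intro fpath_concat) auto
  have c1: "\<exists>i<L+L'. t = (fst (if i \<le> L then P i else P' (i - L)), (if i < L then W i else W' (i - L)),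
      fst (if Suc i \<le> L then P (Suc i) else P' (Suc i - L)))" if tT: "t \<in> T" for t
  proof -
    obtain i where "i < L" "t = (fst (P i), W i, fst (P (Suc i)))" using assms(1) tT unfolding covers_def by auto
    then show ?thesis by (intro exI[of _ i]) auto
  qed
  have c2: "\<exists>i<L+L'. t = (fst (if i \<le> L then P i else P' (i - L)), (if i < L then W i else W' (i - L)),
      fst (if Suc i \<le> L then P (Suc i) else P' (Suc i - L)))" if tT: "t \<in> T'" for t
  proof -
    obtain i where i: "i < L'" "t = (fst (P' i), W' i, fst (P' (Suc i)))" using assms(2) tT unfolding covers_def by auto
    have "P L = P' 0" using assms unfolding covers_def by simp
    then have "(if L + i \<le> L then P (L + i) else P' (L + i - L)) = P' i"
      by (cases "i = 0") auto
    moreover have "Suc (L + i) - L = Suc i" by simp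
    ultimately show ?thesis using i by (intro exI[of _ "L + i"]) auto
  qed
  have e0: "(if 0 \<le> L then P 0 else P' (0 - L)) = x" using assms(1) unfolding covers_def by simp
  have eL: "(if L + L' \<le> L then P (L + L') else P' (L + L' - L)) = x"
    using assms unfolding covers_def by (cases "L' = 0") auto
  show ?thesis unfolding covers_def
    apply (intro conjI fp e0 eL)
    using c1 c2 by blast
qed

lemma covers_finite:
  assumes "finite T" "\<forall>t\<in>T. \<exists>P W L. covers Tr x P W L {t}"
  shows "\<exists>P W L. covers Tr x P W L T"
  using assms
proof (induction T rule: finite_induct)
  case empty
  have "covers Tr x (\<lambda>_. x) (\<lambda>_. undefined) 0 {}" unfolding covers_def fpath_def by simp
  then show ?case by blast
next
  case (insert t F)
  then obtain P W L where 1: "covers Tr x P W L F" by auto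
  obtain P' W' L' where 2: "covers Tr x P' W' L' {t}" using insert by auto
  have eq: "insert t F = F \<union> {t}" by auto
  show ?case unfolding eq using covers_union[OF 1 2] by blast
qed

lemma repeat_path:
  assumes "fpath Tr P W L" "P 0 = P L" "L > 0"
  shows "(P (i mod L), W (i mod L), P (Suc i mod L)) \<in> Tr"
proof -
  have "i mod L < L" using assms(3) by simp
  then have 1: "(P (i mod L), W (i mod L), P (Suc (i mod L))) \<in> Tr" using assms(1) unfolding fpath_def by auto
  have "P (Suc i mod L) = P (Suc (i mod L))"
    using \<open>i mod L < L\<close> assms(2) by (simp add: mod_Suc)
  then show ?thesis using 1 by simp
qed

lemma lasso:
  assumes "fpath Tr Q U N" "Q N = P 0" "fpath Tr' P W L" "P 0 = P L" "L > 0" "Tr' \<subseteq> Tr"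
  defines "R \<equiv> \<lambda>i. if i \<le> N then Q i else P ((i - N) mod L)"
  defines "w' \<equiv> \<lambda>i. if i < N then U i else W ((i - N) mod L)"
  shows "\<And>j. R (N + j) = P (j mod L)" "\<And>j. w' (N + j) = W (j mod L)"
    "\<And>i. (R i, w' i, R (Suc i)) \<in> Tr" "\<And>i. i \<ge> N \<Longrightarrow> (R i, w' i, R (Suc i)) \<in> Tr'" "R 0 = Q 0"
proof -
  show RN: "R (N + j) = P (j mod L)" for j
  proof (cases "j = 0")
    case True then show ?thesis using assms(2) unfolding R_def by simp
  next
    case False then show ?thesis unfolding R_def by simp
  qed
  show wN: "w' (N + j) = W (j mod L)" for j unfolding w'_def by simp
  show TrN: "(R i, w' i, R (Suc i)) \<in> Tr'" if "i \<ge> N" for i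
  proof -
    define j where "j = i - N"
    have j: "i = N + j" using that unfolding j_def by simp
    have "R (Suc i) = P (Suc j mod L)" using RN[of "Suc j"] j by simp
    moreover have "R i = P (j mod L)" "w' i = W (j mod L)" using RN[of j] wN[of j] j by simp_all
    ultimately show ?thesis using repeat_path[OF assms(3,4,5), of j] by simp
  qed
  show "(R i, w' i, R (Suc i)) \<in> Tr" for i
  proof (cases "i < N")
    case True
    then have "R i = Q i" "w' i = U i" "R (Suc i) = Q (Suc i)" unfolding R_def w'_def by simp_all
    moreover have "(Q i, U i, Q (Suc i)) \<in> Tr" using assms(1) True unfolding fpath_def by blast
    ultimately show ?thesis by simp
  next
    case False
    then have "(R i, w' i, R (Suc i)) \<in> Tr'" using TrN by simp
    then show ?thesis using assms(6) by blast
  qed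
  show "R 0 = Q 0" unfolding R_def by simp
qed

lemma det_unique:
  assumes "deterministic X" "r 0 = r' 0"
    "\<forall>i<n. (r i, w i, r (Suc i)) \<in> trans X" "\<forall>i<n. (r' i, w i, r' (Suc i)) \<in> trans X"
  shows "i \<le> n \<Longrightarrow> r i = r' i"
proof (induction i)
  case 0 then show ?case using assms by simp
next
  case (Suc i)
  then have "r i = r' i" by simp
  then show ?case using assms(1,3,4) Suc.prems unfolding deterministic_def
    by (metis Suc_le_lessD)
qed

lemma det_unique_inf:
  assumes "deterministic X" "r 0 = r' 0"
    "\<forall>i. (r i, w i, r (Suc i)) \<in> trans X" "\<forall>i. (r' i, w i, r' (Suc i)) \<in> trans X"
  shows "r = r'"
proof
  fix i show "r i = r' i" using det_unique[where X=X and r=r and r'=r' and n=i and w=w and i=i] assms by auto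
qed

lemma wf_trans: "wf_gba X \<Longrightarrow> (s, a, s') \<in> trans X \<Longrightarrow> s \<in> states X \<and> a \<in> alph X \<and> s' \<in> states X"
proof -
  assume "wf_gba X" "(s, a, s') \<in> trans X"
  moreover have "wf_gba X \<Longrightarrow> trans X \<subseteq> states X \<times> alph X \<times> states X" by (simp add: wf_gba_def)
  ultimately show ?thesis by auto
qed

lemma wf_trans_finite: "wf_gba X \<Longrightarrow> finite (trans X)"
proof -
  assume w: "wf_gba X"
  then have "trans X \<subseteq> states X \<times> alph X \<times> states X" "finite (states X \<times> alph X \<times> states X)"
    unfolding wf_gba_def by auto
  then show ?thesis by (rule finite_subset)
qed

definition PT :: "('p, 'a, 'd) gba \<Rightarrow> ('q, 'a, 'c) gba \<Rightarrow> 'c set \<Rightarrow> (('p \<times> 'q) \<times> 'a \<times> ('p \<times> 'q)) set" where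
  "PT B A X = {((s, r), a, (s', r')). (s, a, s') \<in> trans B \<and> (r, a, r') \<in> trans A \<and> col A (r, a, r') \<inter> X = {}}"

definition enc :: "nat \<times> nat \<times> nat \<Rightarrow> nat" where
  "enc x = prod_encode (fst x, prod_encode (snd x))"

lemma inj_enc: "inj enc"
  unfolding inj_def enc_def by (auto simp: prod_encode_eq)

locale mctx =
  fixes A B0 :: "(nat, nat, nat) gba"
  assumes dA: "dgba A" and dB0: "dgba B0" and alphB0: "alph B0 = alph A" and langB0: "lang B0 = lang A"
begin

definition Pi :: "nat \<Rightarrow> nat \<Rightarrow> nat \<Rightarrow> (nat \<times> nat \<times> nat) set" where
  "Pi c p q = {(s, a, s'). (\<exists>Q U N. fpath (PT B0 A {}) Q U N \<and> Q 0 = (init B0, init A) \<and> Q N = (p, q))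
      \<and> (\<exists>P W L. covers (PT B0 A {c}) (p, q) P W L {(s, a, s')})}"

definition ne :: "nat \<Rightarrow> bool" where
  "ne s \<longleftrightarrow> (\<exists>v \<rho>. \<rho> 0 = s \<and> (\<forall>i. (\<rho> i, v i, \<rho> (Suc i)) \<in> trans B0)
      \<and> (\<forall>d\<in>colours B0. \<exists>\<^sub>\<infinity>i. d \<in> col B0 (\<rho> i, v i, \<rho> (Suc i))))"

definition X :: "(nat \<times> nat \<times> nat) set" where
  "X = colours A \<times> states B0 \<times> states A"

definition Bn :: "(nat, nat, nat) gba" where
  "Bn = \<lparr>states = states B0, alph = alph B0, init = init B0,
         trans = {t \<in> trans B0. ne (snd (snd t))},
         col = (\<lambda>t. enc ` {x \<in> X. t \<notin> Pi (fst x) (fst (snd x)) (snd (snd x))}),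
         colours = enc ` X\<rparr>"

lemma wfA: "wf_gba A" and wfB0: "wf_gba B0" and detA: "deterministic A" and detB0: "deterministic B0"
  using dA dB0 unfolding dgba_def by auto

lemma finX: "finite X"
  using wfA wfB0 unfolding X_def wf_gba_def by auto

lemma PT_iff: "(x, a, y) \<in> PT B A Z \<longleftrightarrow> (fst x, a, fst y) \<in> trans B \<and> (snd x, a, snd y) \<in> trans A \<and> col A (snd x, a, snd y) \<inter> Z = {}"
  by (cases x, cases y) (simp add: PT_def)

lemma sound:
  assumes run: "\<rho> 0 = init B0" "\<forall>i. (\<rho> i, w i, \<rho> (Suc i)) \<in> trans B0"
    and wL: "w \<in> lang A" and c: "c \<in> colours A"
    and ev: "\<forall>j\<ge>N. (\<rho> j, w j, \<rho> (Suc j)) \<in> Pi c p q"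
  shows False
proof -
  define T where "T = {(\<rho> j, w j, \<rho> (Suc j)) | j. j \<ge> N}"
  have "T \<subseteq> trans B0" using run unfolding T_def by auto
  then have finT: "finite T" using wf_trans_finite[OF wfB0] finite_subset by blast
  have tN: "(\<rho> N, w N, \<rho> (Suc N)) \<in> T" unfolding T_def by auto
  obtain Q U N0 where Q: "fpath (PT B0 A {}) Q U N0" "Q 0 = (init B0, init A)" "Q N0 = (p,q)"
    using ev unfolding Pi_def by auto
  have "\<forall>t\<in>T. \<exists>P W L. covers (PT B0 A {c}) (p,q) P W L {t}" using ev unfolding T_def Pi_def by auto
  then obtain P W L where cov: "covers (PT B0 A {c}) (p,q) P W L T" using covers_finite finT by blast
  have L0: "L > 0" using cov tN unfolding covers_def by auto
  have fpP: "fpath (PT B0 A {c}) P W L" and P0: "P 0 = (p,q)" and PL: "P L = (p,q)"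
    using cov unfolding covers_def by auto
  have sub: "PT B0 A {c} \<subseteq> PT B0 A {}" unfolding PT_def by auto
  define R where "R = (\<lambda>i. if i \<le> N0 then Q i else P ((i - N0) mod L))"
  define w' where "w' = (\<lambda>i. if i < N0 then U i else W ((i - N0) mod L))"
  have QP: "Q N0 = P 0" using Q P0 by simp
  have PP: "P 0 = P L" using P0 PL by simp
  note las = lasso[OF Q(1) QP fpP PP L0 sub]
  have RN: "\<And>j. R (N0 + j) = P (j mod L)" and wN: "\<And>j. w' (N0 + j) = W (j mod L)"
    using las(1,2) unfolding R_def w'_def by simp_all
  have RT: "\<And>i. (R i, w' i, R (Suc i)) \<in> PT B0 A {}" using las(3) unfolding R_def w'_def by simp
  have RTc: "\<And>i. i \<ge> N0 \<Longrightarrow> (R i, w' i, R (Suc i)) \<in> PT B0 A {c}"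
    using las(4) unfolding R_def w'_def by simp
  have R0: "R 0 = (init B0, init A)" using Q unfolding R_def by simp
  have B0run: "\<forall>i. (fst (R i), w' i, fst (R (Suc i))) \<in> trans B0" using RT PT_iff by blast
  have Arun: "\<forall>i. (snd (R i), w' i, snd (R (Suc i))) \<in> trans A" using RT PT_iff by blast
  have notA: "w' \<notin> lang A"
  proof
    assume "w' \<in> lang A"
    then obtain r where r: "is_run A w' r" "accepting_run A w' r" unfolding lang_def by auto
    have "r = (\<lambda>i. snd (R i))"
      using det_unique_inf[OF detA, of r "\<lambda>i. snd (R i)" w'] r(1) Arun R0 unfolding is_run_def by auto
    then have "\<exists>\<^sub>\<infinity>i. c \<in> col A (snd (R i), w' i, snd (R (Suc i)))" using c r(2) unfolding accepting_run_def by auto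
    then have "\<exists>i>N0. c \<in> col A (snd (R i), w' i, snd (R (Suc i)))" unfolding INFM_nat by blast
    then obtain i where i: "i > N0" "c \<in> col A (snd (R i), w' i, snd (R (Suc i)))" by blast
    have "(R i, w' i, R (Suc i)) \<in> PT B0 A {c}" using RTc[of i] i(1) by simp
    then have "c \<notin> col A (snd (R i), w' i, snd (R (Suc i)))" unfolding PT_iff by blast
    then show False using i(2) by blast
  qed
  then have "w' \<notin> lang B0" using langB0 by simp
  moreover have "\<forall>i. w' i \<in> alph B0" using B0run wf_trans[OF wfB0] by blast
  moreover have "is_run B0 w' (\<lambda>i. fst (R i))" unfolding is_run_def using B0run R0 by simp
  ultimately have "\<not> accepting_run B0 w' (\<lambda>i. fst (R i))"
    unfolding lang_def by blast
  then obtain d where d: "d \<in> colours B0" "\<not> (\<exists>\<^sub>\<infinity>i. d \<in> col B0 (fst (R i), w' i, fst (R (Suc i))))"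
    unfolding accepting_run_def by auto
  then obtain M where M: "\<forall>i>M. d \<notin> col B0 (fst (R i), w' i, fst (R (Suc i)))"
    unfolding not_INFM MOST_nat by auto
  have dT: "d \<notin> col B0 t" if tT: "t \<in> T" for t
  proof -
    obtain k where k: "k < L" "t = (fst (P k), W k, fst (P (Suc k)))" using cov tT unfolding covers_def by auto
    define i where "i = N0 + (L * Suc M + k)"
    have "L * Suc M \<ge> Suc M" using L0 mult_le_mono1[of 1 L "Suc M"] by simp
    then have iM: "i > M" unfolding i_def by linarith
    have m1: "(L * Suc M + k) mod L = k" using k mod_mult_self4[of L "Suc M" k] by simp
    have m2: "(L * Suc M + Suc k) mod L = Suc k mod L" by (rule mod_mult_self4)
    have m3: "P (Suc k mod L) = P (Suc k)" using k PP by (cases "Suc k = L") auto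
    have "R i = P k" "w' i = W k" using RN wN m1 unfolding i_def by auto
    moreover have "R (Suc i) = P (Suc k)"
      using RN[of "L * Suc M + Suc k"] m2 m3 unfolding i_def by simp
    ultimately have "t = (fst (R i), w' i, fst (R (Suc i)))" using k by simp
    then show ?thesis using M iM by auto
  qed
  have "w \<in> lang B0" using wL langB0 by simp
  then obtain r where r: "is_run B0 w r" "accepting_run B0 w r" unfolding lang_def by auto
  have "r = \<rho>" using det_unique_inf[OF detB0, of r \<rho> w] r(1) run unfolding is_run_def by auto
  then have "\<exists>\<^sub>\<infinity>i. d \<in> col B0 (\<rho> i, w i, \<rho> (Suc i))" using d(1) r(2) unfolding accepting_run_def by auto
  then have "\<exists>j>N. d \<in> col B0 (\<rho> j, w j, \<rho> (Suc j))" unfolding INFM_nat by blast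
  then obtain j where "j > N" "d \<in> col B0 (\<rho> j, w j, \<rho> (Suc j))" by blast
  moreover have "(\<rho> j, w j, \<rho> (Suc j)) \<in> T" using \<open>j > N\<close> unfolding T_def by auto
  ultimately show False using dT by blast
qed

lemma Arun_exists:
  assumes run: "\<rho> 0 = init B0" "\<forall>i. (\<rho> i, w i, \<rho> (Suc i)) \<in> trans B0"
    and nes: "\<forall>i. ne (\<rho> (Suc i))"
  shows "\<exists>\<sigma>. \<sigma> 0 = init A \<and> (\<forall>i. (\<sigma> i, w i, \<sigma> (Suc i)) \<in> trans A)"
proof (rule ccontr)
  assume H: "\<not> ?thesis"
  define \<sigma> where "\<sigma> = rec_nat (init A) (\<lambda>i q. SOME q'. (q, w i, q') \<in> trans A)"
  have \<sigma>0: "\<sigma> 0 = init A" and \<sigma>S: "\<And>i. \<sigma> (Suc i) = (SOME q'. (\<sigma> i, w i, q') \<in> trans A)"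
    unfolding \<sigma>_def by simp_all
  have ex: "\<exists>i. (\<sigma> i, w i, \<sigma> (Suc i)) \<notin> trans A" using H \<sigma>0 by auto
  define i where "i = (LEAST i. (\<sigma> i, w i, \<sigma> (Suc i)) \<notin> trans A)"
  have i: "(\<sigma> i, w i, \<sigma> (Suc i)) \<notin> trans A" unfolding i_def using ex by (rule LeastI_ex)
  have mini: "\<forall>j<i. (\<sigma> j, w j, \<sigma> (Suc j)) \<in> trans A" unfolding i_def using not_less_Least by blast
  have nostep: "\<not> (\<exists>q'. (\<sigma> i, w i, q') \<in> trans A)"
  proof
    assume "\<exists>q'. (\<sigma> i, w i, q') \<in> trans A"
    then have "(\<sigma> i, w i, SOME q'. (\<sigma> i, w i, q') \<in> trans A) \<in> trans A" by (rule someI_ex)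
    then show False using i \<sigma>S by simp
  qed
  obtain v \<rho>' where \<rho>': "\<rho>' 0 = \<rho> (Suc i)" "\<forall>j. (\<rho>' j, v j, \<rho>' (Suc j)) \<in> trans B0"
    "\<forall>d\<in>colours B0. \<exists>\<^sub>\<infinity>j. d \<in> col B0 (\<rho>' j, v j, \<rho>' (Suc j))"
    using nes unfolding ne_def by blast
  define w'' where "w'' = (\<lambda>k. if k \<le> i then w k else v (k - Suc i))"
  define \<rho>'' where "\<rho>'' = (\<lambda>k. if k \<le> i then \<rho> k else \<rho>' (k - Suc i))"
  have tr: "\<forall>k. (\<rho>'' k, w'' k, \<rho>'' (Suc k)) \<in> trans B0"
  proof
    fix k
    consider "k < i" | "k = i" | "k > i" by linarith
    then show "(\<rho>'' k, w'' k, \<rho>'' (Suc k)) \<in> trans B0"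
    proof cases
      case 1 then show ?thesis using run(2) unfolding \<rho>''_def w''_def by auto
    next
      case 2 then show ?thesis using run(2) \<rho>'(1) unfolding \<rho>''_def w''_def by auto
    next
      case 3
      then have "Suc k - Suc i = Suc (k - Suc i)" by simp
      then show ?thesis using 3 \<rho>'(2) unfolding \<rho>''_def w''_def by auto
    qed
  qed
  have acc: "accepting_run B0 w'' \<rho>''"
    unfolding accepting_run_def
  proof
    fix d assume "d \<in> colours B0"
    then have inf: "\<exists>\<^sub>\<infinity>j. d \<in> col B0 (\<rho>' j, v j, \<rho>' (Suc j))" using \<rho>'(3) by blast
    show "\<exists>\<^sub>\<infinity>k. d \<in> col B0 (\<rho>'' k, w'' k, \<rho>'' (Suc k))" unfolding INFM_nat
    proof
      fix m
      obtain j where "j > m" "d \<in> col B0 (\<rho>' j, v j, \<rho>' (Suc j))" using inf unfolding INFM_nat by blast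
      then show "\<exists>n>m. d \<in> col B0 (\<rho>'' n, w'' n, \<rho>'' (Suc n))"
        by (intro exI[of _ "Suc i + j"]) (simp add: \<rho>''_def w''_def)
    qed
  qed
  have "\<rho>'' 0 = init B0" using run(1) unfolding \<rho>''_def by simp
  moreover have "\<forall>k. w'' k \<in> alph B0" using tr wf_trans[OF wfB0] by blast
  ultimately have "w'' \<in> lang B0" unfolding lang_def is_run_def using tr acc by auto
  then have "w'' \<in> lang A" using langB0 by simp
  then obtain r where r: "r 0 = init A" "\<forall>k. (r k, w'' k, r (Suc k)) \<in> trans A"
    unfolding lang_def is_run_def by auto
  have "\<forall>j<i. (\<sigma> j, w'' j, \<sigma> (Suc j)) \<in> trans A" using mini unfolding w''_def by auto
  then have "r i = \<sigma> i" using det_unique[OF detA, where r=r and r'=\<sigma> and n=i and w=w'' and i=i] r \<sigma>0 by auto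
  then have "(\<sigma> i, w i, r (Suc i)) \<in> trans A" using r(2)[rule_format, of i] unfolding w''_def by simp
  with nostep show False by auto
qed

lemma complete:
  assumes run: "\<rho> 0 = init B0" "\<forall>i. (\<rho> i, w i, \<rho> (Suc i)) \<in> trans B0"
    and nes: "\<forall>i. ne (\<rho> (Suc i))" and wn: "w \<notin> lang A"
  shows "\<exists>c\<in>colours A. \<exists>p\<in>states B0. \<exists>q\<in>states A. \<exists>N. \<forall>j\<ge>N. (\<rho> j, w j, \<rho> (Suc j)) \<in> Pi c p q"
proof -
  obtain \<sigma> where \<sigma>: "\<sigma> 0 = init A" "\<forall>i. (\<sigma> i, w i, \<sigma> (Suc i)) \<in> trans A"
    using Arun_exists[OF run nes] by blast
  have alph: "\<forall>i. w i \<in> alph A" using run(2) wf_trans[OF wfB0] alphB0 by blast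
  have "\<not> accepting_run A w \<sigma>" using wn alph \<sigma> unfolding lang_def is_run_def by auto
  then obtain c where c: "c \<in> colours A" "\<not> (\<exists>\<^sub>\<infinity>i. c \<in> col A (\<sigma> i, w i, \<sigma> (Suc i)))"
    unfolding accepting_run_def by auto
  then obtain N where N: "\<forall>i>N. c \<notin> col A (\<sigma> i, w i, \<sigma> (Suc i))"
    unfolding not_INFM MOST_nat by auto
  define f where "f = (\<lambda>i. (\<rho> i, \<sigma> i))"
  have fst_in: "\<And>i. \<rho> i \<in> states B0" using run(2) wf_trans[OF wfB0] by blast
  have snd_in: "\<And>i. \<sigma> i \<in> states A" using \<sigma>(2) wf_trans[OF wfA] by blast
  have "f ` {Suc N..} \<subseteq> states B0 \<times> states A" unfolding f_def using fst_in snd_in by auto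
  then have fin: "finite (f ` {Suc N..})" using wfA wfB0 unfolding wf_gba_def
    by (meson finite_SigmaI finite_subset)
  obtain pq where pq: "infinite (f -` {pq} \<inter> {Suc N..})"
    using inf_img_fin_dom'[OF fin infinite_Ici] by blast
  obtain p q where pqd: "pq = (p, q)" by (cases pq)
  define S where "S = f -` {pq} \<inter> {Suc N..}"
  have infS: "infinite S" using pq unfolding S_def .
  then obtain i1 where i1: "i1 \<in> S" by (metis finite.emptyI ex_in_conv)
  have fi1: "f i1 = (p, q)" and i1N: "i1 > N" using i1 pqd unfolding S_def by auto
  have pin: "p \<in> states B0" and qin: "q \<in> states A" using fi1 fst_in snd_in unfolding f_def by auto
  have PTstep: "(f k, w k, f (Suc k)) \<in> PT B0 A {}" for k
    using run(2) \<sigma>(2) unfolding f_def PT_iff by auto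
  have PTstepc: "(f k, w k, f (Suc k)) \<in> PT B0 A {c}" if "k > N" for k
    using run(2) \<sigma>(2) N that unfolding f_def PT_iff by auto
  have reach: "fpath (PT B0 A {}) f w i1" "f 0 = (init B0, init A)"
    using PTstep unfolding fpath_def f_def using run(1) \<sigma>(1) by auto
  have H: "(\<rho> j, w j, \<rho> (Suc j)) \<in> Pi c p q" if j: "j \<ge> i1" for j
  proof -
    obtain i' where i': "i' > j" "i' \<in> S" using infS unfolding infinite_nat_iff_unbounded by blast
    have fi': "f i' = (p, q)" using i' pqd unfolding S_def by auto
    define P where "P = (\<lambda>k. f (i1 + k))"
    define W where "W = (\<lambda>k. w (i1 + k))"
    define L where "L = i' - i1"
    have "covers (PT B0 A {c}) (p,q) P W L {(\<rho> j, w j, \<rho> (Suc j))}"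
      unfolding covers_def fpath_def
    proof (intro conjI allI impI ballI)
      fix k assume "k < L"
      show "(P k, W k, P (Suc k)) \<in> PT B0 A {c}" unfolding P_def W_def
        using PTstepc[of "i1 + k"] i1N by simp
    next
      show "P 0 = (p, q)" unfolding P_def using fi1 by simp
    next
      show "P L = (p, q)" unfolding P_def L_def using fi' i' j by simp
    next
      fix t assume "t \<in> {(\<rho> j, w j, \<rho> (Suc j))}"
      then show "\<exists>i<L. t = (fst (P i), W i, fst (P (Suc i)))"
        unfolding P_def W_def L_def f_def using i' j
        by (intro exI[of _ "j - i1"]) auto
    qed
    then show ?thesis unfolding Pi_def using reach fi1 by blast
  qed
  show ?thesis using c(1) pin qin H by blast
qed

lemma dgba_Bn: "dgba Bn"
  using wfB0 detB0 finX unfolding dgba_def wf_gba_def deterministic_def Bn_def by auto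

lemma col_Bn: "x \<in> X \<Longrightarrow> enc x \<in> col Bn t \<longleftrightarrow> t \<notin> Pi (fst x) (fst (snd x)) (snd (snd x))"
  unfolding Bn_def using inj_enc by (auto simp: inj_image_mem_iff)

lemma lang_Bn: "lang Bn = lang A"
proof
  show "lang Bn \<subseteq> lang A"
  proof
    fix w assume "w \<in> lang Bn"
    then obtain \<rho> where al: "\<forall>i. w i \<in> alph A" and r: "is_run Bn w \<rho>" and acc: "accepting_run Bn w \<rho>"
      unfolding lang_def Bn_def using alphB0 by auto
    have run: "\<rho> 0 = init B0" "\<forall>i. (\<rho> i, w i, \<rho> (Suc i)) \<in> trans B0" and nes: "\<forall>i. ne (\<rho> (Suc i))"
      using r unfolding is_run_def Bn_def by auto
    show "w \<in> lang A"
    proof (rule ccontr)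
      assume "w \<notin> lang A"
      then obtain c p q N where cpq: "c \<in> colours A" "p \<in> states B0" "q \<in> states A"
        and ev: "\<forall>j\<ge>N. (\<rho> j, w j, \<rho> (Suc j)) \<in> Pi c p q"
        using complete[OF run nes] by blast
      have x: "(c, p, q) \<in> X" using cpq unfolding X_def by auto
      then have "enc (c, p, q) \<in> colours Bn" unfolding Bn_def by auto
      then have "\<exists>\<^sub>\<infinity>i. enc (c, p, q) \<in> col Bn (\<rho> i, w i, \<rho> (Suc i))"
        using acc unfolding accepting_run_def by auto
      then obtain i where "i > N" "enc (c, p, q) \<in> col Bn (\<rho> i, w i, \<rho> (Suc i))"
        unfolding INFM_nat by blast
      then show False using col_Bn[OF x] ev by auto
    qed
  qed
next
  show "lang A \<subseteq> lang Bn"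
  proof
    fix w assume wA: "w \<in> lang A"
    then have "w \<in> lang B0" using langB0 by simp
    then obtain \<rho> where al: "\<forall>i. w i \<in> alph B0" and run: "\<rho> 0 = init B0" "\<forall>i. (\<rho> i, w i, \<rho> (Suc i)) \<in> trans B0"
      and acc: "accepting_run B0 w \<rho>"
      unfolding lang_def is_run_def by auto
    have nes: "ne (\<rho> (Suc i))" for i
      unfolding ne_def
    proof (intro exI conjI)
      show "(\<lambda>j. \<rho> (Suc i + j)) 0 = \<rho> (Suc i)" by simp
      show "\<forall>j. ((\<lambda>j. \<rho> (Suc i + j)) j, (\<lambda>j. w (Suc i + j)) j, (\<lambda>j. \<rho> (Suc i + j)) (Suc j)) \<in> trans B0"
      proof
        fix j show "((\<lambda>j. \<rho> (Suc i + j)) j, (\<lambda>j. w (Suc i + j)) j, (\<lambda>j. \<rho> (Suc i + j)) (Suc j)) \<in> trans B0"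
          using run(2)[rule_format, of "Suc i + j"] by simp
      qed
      show "\<forall>d\<in>colours B0. \<exists>\<^sub>\<infinity>j. d \<in> col B0 ((\<lambda>j. \<rho> (Suc i + j)) j, (\<lambda>j. w (Suc i + j)) j, (\<lambda>j. \<rho> (Suc i + j)) (Suc j))"
      proof
        fix d assume "d \<in> colours B0"
        then have inf: "\<exists>\<^sub>\<infinity>n. d \<in> col B0 (\<rho> n, w n, \<rho> (Suc n))" using acc unfolding accepting_run_def by auto
        show "\<exists>\<^sub>\<infinity>j. d \<in> col B0 ((\<lambda>j. \<rho> (Suc i + j)) j, (\<lambda>j. w (Suc i + j)) j, (\<lambda>j. \<rho> (Suc i + j)) (Suc j))"
          unfolding INFM_nat
        proof
          fix m
          obtain n where n: "n > m + Suc i" "d \<in> col B0 (\<rho> n, w n, \<rho> (Suc n))" using inf unfolding INFM_nat by blast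
          define j where "j = n - Suc i"
          have j: "n = Suc i + j" using n(1) unfolding j_def by simp
          then have "j > m" using n by simp
          then show "\<exists>j>m. d \<in> col B0 ((\<lambda>j. \<rho> (Suc i + j)) j, (\<lambda>j. w (Suc i + j)) j, (\<lambda>j. \<rho> (Suc i + j)) (Suc j))"
            using n(2) j by (intro exI[of _ j]) simp
        qed
      qed
    qed
    have rB: "is_run Bn w \<rho>" unfolding is_run_def Bn_def using run nes by auto
    have aB: "accepting_run Bn w \<rho>"
      unfolding accepting_run_def
    proof
      fix y assume "y \<in> colours Bn"
      then obtain x where x: "x \<in> X" "y = enc x" unfolding Bn_def by auto
      obtain c p q where xd: "x = (c, p, q)" by (cases x)
      have c: "c \<in> colours A" using x xd unfolding X_def by auto
      show "\<exists>\<^sub>\<infinity>i. y \<in> col Bn (\<rho> i, w i, \<rho> (Suc i))"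
      proof (rule ccontr)
        assume "\<not> ?thesis"
        then obtain N where "\<forall>i>N. y \<notin> col Bn (\<rho> i, w i, \<rho> (Suc i))" unfolding not_INFM MOST_nat by auto
        then have "\<forall>j\<ge>Suc N. (\<rho> j, w j, \<rho> (Suc j)) \<in> Pi c p q" using col_Bn[OF x(1)] x xd by auto
        then show False using sound[OF run wA c] by blast
      qed
    qed
    show "w \<in> lang Bn" unfolding lang_def using rB aB al unfolding Bn_def by auto
  qed
qed

end

theorem lemma31:
  shows "\<exists>K::nat. \<forall>A :: (nat, nat, nat) gba. dgba A \<longrightarrow>
    (\<exists>B :: (nat, nat, nat) gba. dgba B \<and> alph B = alph A \<and> lang B = lang A
       \<and> (\<forall>C :: (nat, nat, nat) gba. dgba C \<and> alph C = alph A \<and> lang C = lang A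
              \<longrightarrow> card (states B) \<le> card (states C))
       \<and> card (colours B) \<le> K * (card (states A))\<^sup>2 * card (colours A))"
proof (intro exI[of _ 1] allI impI)
  fix A :: "(nat, nat, nat) gba"
  assume dA: "dgba A"
  have "\<exists>B0 :: (nat, nat, nat) gba. (dgba B0 \<and> alph B0 = alph A \<and> lang B0 = lang A) \<and>
    (\<forall>C :: (nat, nat, nat) gba. dgba C \<and> alph C = alph A \<and> lang C = lang A \<longrightarrow> card (states B0) \<le> card (states C))"
  proof -
    have H: "dgba A \<and> alph A = alph A \<and> lang A = lang A" using dA by simp
    show ?thesis
      using ex_has_least_nat[where P="\<lambda>C. dgba C \<and> alph C = alph A \<and> lang C = lang A" and k=A and m="\<lambda>C. card (states C)", OF H]
      by blast
  qed
  then obtain B0 :: "(nat, nat, nat) gba" where B0: "dgba B0 \<and> alph B0 = alph A \<and> lang B0 = lang A"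
    and minB0: "\<forall>C :: (nat, nat, nat) gba. dgba C \<and> alph C = alph A \<and> lang C = lang A \<longrightarrow> card (states B0) \<le> card (states C)"
    by blast
  interpret m: mctx A B0 using dA B0 by unfold_locales auto
  have le: "card (states B0) \<le> card (states A)" using minB0 dA by auto
  have "card (colours m.Bn) \<le> card m.X" unfolding m.Bn_def using card_image_le m.finX by auto
  also have "\<dots> = card (colours A) * (card (states B0) * card (states A))"
    unfolding m.X_def by (simp add: card_cartesian_product)
  also have "\<dots> \<le> card (colours A) * (card (states A) * card (states A))"
    using le by (intro mult_le_mono2 mult_le_mono1)
  also have "\<dots> = 1 * (card (states A))\<^sup>2 * card (colours A)" by (simp add: power2_eq_square)
  finally have cb: "card (colours m.Bn) \<le> 1 * (card (states A))\<^sup>2 * card (colours A)" .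
  show "\<exists>B :: (nat, nat, nat) gba. dgba B \<and> alph B = alph A \<and> lang B = lang A
       \<and> (\<forall>C :: (nat, nat, nat) gba. dgba C \<and> alph C = alph A \<and> lang C = lang A
              \<longrightarrow> card (states B) \<le> card (states C))
       \<and> card (colours B) \<le> 1 * (card (states A))\<^sup>2 * card (colours A)"
    apply (rule exI[of _ m.Bn])
    using m.dgba_Bn m.lang_Bn B0 minB0 cb unfolding m.Bn_def by auto
qed

end
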